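(* Let $\Gamma$ be a hyperbolic group such that $\mathrm{Out}(\Gamma)$ is infinite, and let $S$ be any finite generating set of $\Gamma$. Then $\mathcal{B}_S=S\cup\{ss'\mid s,s'\in S,\ s\neq s'\}$ is a test subset: for every sequence $(\phi_n)$ of distinct elements of $\mathrm{Out}(\Gamma)$ there is $b\in\mathcal{B}_S$ with $\limsup_n l_S(\phi_n(b))=\infty$.
   Context: $l_S(\gamma)=\min_{g\in\Gamma}|g\gamma g^{-1}|_S$ is the translation length of $\gamma$ on the Cayley graph $C_S(\Gamma)$ (well defined on outer automorphism classes), $|\cdot|_S$ the word length. *)

theory Defs
  imports Complex_Main "HOL-Algebra.Generated_Groups" "HOL-Library.Liminf_Limsup" "HOL-Library.Extended_Real"
begin

definition word_length :: "('a, 'b) monoid_scheme \<Rightarrow> 'a set \<Rightarrow> 'a \<Rightarrow> nat" where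
  "word_length G S g = (LEAST n. \<exists>ws. length ws = n \<and> set ws \<subseteq> S \<union> m_inv G ` S
      \<and> foldr (\<lambda>a b. a \<otimes>\<^bsub>G\<^esub> b) ws \<one>\<^bsub>G\<^esub> = g)"

definition word_dist :: "('a, 'b) monoid_scheme \<Rightarrow> 'a set \<Rightarrow> 'a \<Rightarrow> 'a \<Rightarrow> real" where
  "word_dist G S x y = real (word_length G S (inv\<^bsub>G\<^esub> x \<otimes>\<^bsub>G\<^esub> y))"

definition gromov_product :: "('a, 'b) monoid_scheme \<Rightarrow> 'a set \<Rightarrow> 'a \<Rightarrow> 'a \<Rightarrow> 'a \<Rightarrow> real" where
  "gromov_product G S w x y = (word_dist G S w x + word_dist G S w y - word_dist G S x y) / 2"

definition finite_generating_set :: "('a, 'b) monoid_scheme \<Rightarrow> 'a set \<Rightarrow> bool" where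
  "finite_generating_set G S \<longleftrightarrow> finite S \<and> S \<subseteq> carrier G \<and> generate G S = carrier G"

definition hyperbolic_group :: "('a, 'b) monoid_scheme \<Rightarrow> bool" where
  "hyperbolic_group G \<longleftrightarrow> group G \<and> (\<exists>S \<delta>. finite_generating_set G S \<and>
     (\<forall>w\<in>carrier G. \<forall>x\<in>carrier G. \<forall>y\<in>carrier G. \<forall>z\<in>carrier G.
        gromov_product G S w x z \<ge> min (gromov_product G S w x y) (gromov_product G S w y z) - \<delta>))"

definition transl_length :: "('a, 'b) monoid_scheme \<Rightarrow> 'a set \<Rightarrow> 'a \<Rightarrow> nat" where
  "transl_length G S \<gamma> = (LEAST n. \<exists>g\<in>carrier G. n = word_length G S (g \<otimes>\<^bsub>G\<^esub> \<gamma> \<otimes>\<^bsub>G\<^esub> inv\<^bsub>G\<^esub> g))"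

definition out_equiv :: "('a, 'b) monoid_scheme \<Rightarrow> ('a \<Rightarrow> 'a) \<Rightarrow> ('a \<Rightarrow> 'a) \<Rightarrow> bool" where
  "out_equiv G \<phi> \<psi> \<longleftrightarrow> (\<exists>g\<in>carrier G. \<forall>x\<in>carrier G. \<phi> x = g \<otimes>\<^bsub>G\<^esub> \<psi> x \<otimes>\<^bsub>G\<^esub> inv\<^bsub>G\<^esub> g)"

definition Out :: "('a, 'b) monoid_scheme \<Rightarrow> ('a \<Rightarrow> 'a) set set" where
  "Out G = (\<lambda>\<phi>. {\<psi> \<in> iso G G. out_equiv G \<phi> \<psi>}) ` iso G G"

definition test_set_B :: "('a, 'b) monoid_scheme \<Rightarrow> 'a set \<Rightarrow> 'a set" where
  "test_set_B G S = S \<union> {s \<otimes>\<^bsub>G\<^esub> s' | s s'. s \<in> S \<and> s' \<in> S \<and> s \<noteq> s'}"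

end

theory Submission
  imports Defs
begin


primrec altw :: "('a, 'b) monoid_scheme \<Rightarrow> 'a \<Rightarrow> 'a \<Rightarrow> nat \<Rightarrow> 'a" where
  "altw G a b 0 = \<one>\<^bsub>G\<^esub>"
| "altw G a b (Suc n) = altw G a b n \<otimes>\<^bsub>G\<^esub> (if even n then a else b)"

locale wgroup = group +
  fixes S :: "'a set"
  assumes S_sub: "S \<subseteq> carrier G" and S_gen: "generate G S = carrier G"
begin

abbreviation fp :: "'a list \<Rightarrow> 'a" where "fp ws \<equiv> foldr (\<lambda>a b. a \<otimes> b) ws \<one>"

abbreviation alph where "alph \<equiv> S \<union> m_inv G ` S"

abbreviation wl where "wl \<equiv> word_length G S"

lemma alph_sub: "alph \<subseteq> carrier G" using S_sub by auto

lemma fp_closed: "set ws \<subseteq> carrier G \<Longrightarrow> fp ws \<in> carrier G"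
  by (induct ws) auto

lemma fp_append: "set ws \<subseteq> carrier G \<Longrightarrow> set vs \<subseteq> carrier G \<Longrightarrow> fp (ws @ vs) = fp ws \<otimes> fp vs"
  by (induct ws) (auto simp: m_assoc fp_closed)

lemma wl_le: "set ws \<subseteq> alph \<Longrightarrow> wl (fp ws) \<le> length ws"
  unfolding word_length_def by (rule Least_le) auto

lemma words_exist: "g \<in> generate G S \<Longrightarrow> \<exists>ws. set ws \<subseteq> alph \<and> fp ws = g"
proof (induct g rule: generate.induct)
  case one then show ?case by (intro exI[of _ "[]"]) auto
next
  case (incl h) then show ?case using S_sub by (intro exI[of _ "[h]"]) auto
next
  case (inv h) then show ?case using S_sub by (intro exI[of _ "[inv h]"]) auto
next
  case (eng h1 h2)
  then obtain ws vs where "set ws \<subseteq> alph" "fp ws = h1" "set vs \<subseteq> alph" "fp vs = h2" by blast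
  moreover have "set ws \<subseteq> carrier G" "set vs \<subseteq> carrier G" using calculation alph_sub by auto
  ultimately show ?case using fp_append[of ws vs] by (intro exI[of _ "ws @ vs"]) (auto simp del: foldr_append)
qed

lemma wl_attained: assumes "g \<in> carrier G"
  shows "\<exists>ws. length ws = wl g \<and> set ws \<subseteq> alph \<and> fp ws = g"
proof -
  obtain ws where "set ws \<subseteq> alph \<and> fp ws = g" using words_exist assms S_gen by blast
  then have "\<exists>n ws. length ws = n \<and> set ws \<subseteq> alph \<and> fp ws = g" by blast
  then show ?thesis unfolding word_length_def by (rule LeastI_ex)
qed

lemma wl_mult: assumes "g \<in> carrier G" "h \<in> carrier G" shows "wl (g \<otimes> h) \<le> wl g + wl h"
proof -
  obtain ws where w: "length ws = wl g" "set ws \<subseteq> alph" "fp ws = g" using wl_attained assms by blast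
  obtain vs where v: "length vs = wl h" "set vs \<subseteq> alph" "fp vs = h" using wl_attained assms by blast
  have "fp (ws @ vs) = g \<otimes> h" using w v alph_sub fp_append[of ws vs] by (auto simp del: foldr_append)
  moreover have "set (ws @ vs) \<subseteq> alph" using w v by auto
  ultimately show ?thesis using wl_le[of "ws @ vs"] w v by auto
qed

lemma fp_inv: "set ws \<subseteq> carrier G \<Longrightarrow> fp (rev (map (m_inv G) ws)) = inv (fp ws)"
proof (induct ws)
  case Nil then show ?case by simp
next
  case (Cons a ws)
  have "fp (rev (map (m_inv G) (a # ws))) = fp (rev (map (m_inv G) ws)) \<otimes> fp [inv a]"
    using Cons fp_append[of "rev (map (m_inv G) ws)" "[inv a]"] by (auto simp del: foldr_append)
  also have "\<dots> = inv (fp ws) \<otimes> inv a" using Cons by simp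
  also have "\<dots> = inv (a \<otimes> fp ws)" using Cons by (simp add: inv_mult_group fp_closed)
  finally show ?case by simp
qed

lemma wl_inv_le: assumes "g \<in> carrier G" shows "wl (inv g) \<le> wl g"
proof -
  obtain ws where w: "length ws = wl g" "set ws \<subseteq> alph" "fp ws = g" using wl_attained assms by blast
  have "set (rev (map (m_inv G) ws)) \<subseteq> alph" using w(2) S_sub by (auto simp: subset_iff)
  moreover have "fp (rev (map (m_inv G) ws)) = inv g" using fp_inv w alph_sub by auto
  ultimately show ?thesis using wl_le[of "rev (map (m_inv G) ws)"] w by auto
qed

lemma wl_inv: assumes "g \<in> carrier G" shows "wl (inv g) = wl g"
  using wl_inv_le[OF assms] wl_inv_le[of "inv g"] assms by force

lemma wl_one: "wl \<one> = 0" using wl_le[of "[]"] by simp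

abbreviation d where "d \<equiv> word_dist G S"
definition D where "D g x = d x (g \<otimes> x)"

lemma d_nonneg: "0 \<le> d x y" unfolding word_dist_def by simp

lemma d_refl: "x \<in> carrier G \<Longrightarrow> d x x = 0"
  unfolding word_dist_def using wl_one by simp

lemma d_sym: assumes "x \<in> carrier G" "y \<in> carrier G" shows "d x y = d y x"
proof -
  have "inv (inv x \<otimes> y) = inv y \<otimes> x" using assms by (simp add: inv_mult_group)
  then show ?thesis unfolding word_dist_def using wl_inv[of "inv x \<otimes> y"] assms by simp
qed

lemma d_tri: assumes "x \<in> carrier G" "y \<in> carrier G" "z \<in> carrier G" shows "d x z \<le> d x y + d y z"
proof -
  have "inv x \<otimes> z = (inv x \<otimes> y) \<otimes> (inv y \<otimes> z)" using assms
    by (simp add: m_assoc[symmetric]) (simp add: m_assoc r_inv)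
  then show ?thesis unfolding word_dist_def using wl_mult[of "inv x \<otimes> y" "inv y \<otimes> z"] assms by simp
qed

lemma d_isom: assumes "g \<in> carrier G" "x \<in> carrier G" "y \<in> carrier G" shows "d (g \<otimes> x) (g \<otimes> y) = d x y"
proof -
  have "inv (g \<otimes> x) \<otimes> (g \<otimes> y) = inv x \<otimes> y" using assms
    by (simp add: inv_mult_group m_assoc) (simp add: m_assoc[symmetric])
  then show ?thesis unfolding word_dist_def by simp
qed

lemma neighbor: assumes "z \<in> carrier G" "q \<in> carrier G" "wl (inv z \<otimes> q) = Suc n"
  shows "\<exists>z'\<in>carrier G. d z z' \<le> 1 \<and> wl (inv z' \<otimes> q) \<le> n"
proof -
  obtain ws where w: "length ws = Suc n" "set ws \<subseteq> alph" "fp ws = inv z \<otimes> q"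
    using wl_attained[of "inv z \<otimes> q"] assms by auto
  then obtain a vs where ws: "ws = a # vs" by (cases ws) auto
  have a: "a \<in> carrier G" and vs: "set vs \<subseteq> carrier G" using w ws alph_sub by auto
  have "inv z \<otimes> (z \<otimes> a) = a" using assms a by (simp add: m_assoc[symmetric])
  then have 1: "d z (z \<otimes> a) \<le> 1" unfolding word_dist_def using wl_le[of "[a]"] w ws a by auto
  have "inv (z \<otimes> a) \<otimes> q = inv a \<otimes> (inv z \<otimes> q)" using assms a by (simp add: inv_mult_group m_assoc)
  also have "\<dots> = inv a \<otimes> (a \<otimes> fp vs)" using w ws by simp
  also have "\<dots> = fp vs" using a fp_closed[OF vs] by (simp add: m_assoc[symmetric])
  finally have "wl (inv (z \<otimes> a) \<otimes> q) \<le> n" using wl_le[of vs] w ws by auto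
  then show ?thesis using 1 assms a by (intro bexI[of _ "z \<otimes> a"]) auto
qed

lemma D_move: assumes "g \<in> carrier G" "x \<in> carrier G" "y \<in> carrier G" shows "D g y \<le> D g x + 2 * d x y"
proof -
  have "d y (g \<otimes> y) \<le> d y x + d x (g \<otimes> x) + d (g \<otimes> x) (g \<otimes> y)"
    using d_tri[of y x "g \<otimes> y"] d_tri[of x "g \<otimes> x" "g \<otimes> y"] assms by auto
  then show ?thesis unfolding D_def using d_isom[of g x y] d_sym[of y x] assms by auto
qed

lemma D_inv: assumes "g \<in> carrier G" "x \<in> carrier G" shows "D (inv g) x = D g x"
proof -
  have "d x (inv g \<otimes> x) = d (g \<otimes> x) (g \<otimes> (inv g \<otimes> x))" using d_isom assms by simp
  also have "\<dots> = d x (g \<otimes> x)" using assms d_sym by (simp add: m_assoc[symmetric])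
  finally show ?thesis unfolding D_def .
qed

abbreviation gp where "gp \<equiv> gromov_product G S"

lemma gp_sym: "x \<in> carrier G \<Longrightarrow> y \<in> carrier G \<Longrightarrow> gp w x y = gp w y x"
  unfolding gromov_product_def using d_sym[of x y] by simp

lemma gp_isom: "g \<in> carrier G \<Longrightarrow> w \<in> carrier G \<Longrightarrow> x \<in> carrier G \<Longrightarrow> y \<in> carrier G \<Longrightarrow>
  gp (g \<otimes> w) (g \<otimes> x) (g \<otimes> y) = gp w x y"
  unfolding gromov_product_def by (simp add: d_isom)

lemma gp_base: "x \<in> carrier G \<Longrightarrow> gp x x y = 0"
  unfolding gromov_product_def by (simp add: d_refl)

lemma gp_swap: "x \<in> carrier G \<Longrightarrow> y \<in> carrier G \<Longrightarrow> z \<in> carrier G \<Longrightarrow> gp y x z + gp x y z = d x y"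
  unfolding gromov_product_def using d_sym[of x y] d_sym[of x z] d_sym[of y z] by (simp add: field_simps)

end

locale hgroup = wgroup +
  fixes \<delta> :: real
  assumes four: "\<And>w x y z. w \<in> carrier G \<Longrightarrow> x \<in> carrier G \<Longrightarrow> y \<in> carrier G \<Longrightarrow> z \<in> carrier G \<Longrightarrow>
     gp w x z \<ge> min (gp w x y) (gp w y z) - \<delta>"
begin

lemma delta_nonneg: "0 \<le> \<delta>"
  using four[of \<one> \<one> \<one> \<one>] gp_base[of \<one>] by simp

lemma chain1:
  assumes y: "\<And>i. y i \<in> carrier G" and A: "\<And>i. A \<le> d (y i) (y (Suc i))"
    and c: "\<And>i. gp (y (Suc i)) (y i) (y (Suc (Suc i))) \<le> c" and c0: "0 \<le> c" and Ac: "2*c+2*\<delta> < A"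
  shows "gp (y n) (y 0) (y (Suc n)) \<le> c + \<delta>"
proof (induct n)
  case 0 then show ?case using gp_base[of "y 0"] y c0 delta_nonneg by simp
next
  case (Suc n)
  have "gp (y (Suc n)) (y n) (y 0) + gp (y n) (y (Suc n)) (y 0) = d (y n) (y (Suc n))"
    using gp_swap y by blast
  moreover have "gp (y n) (y (Suc n)) (y 0) = gp (y n) (y 0) (y (Suc n))" using gp_sym y by blast
  ultimately have 1: "gp (y (Suc n)) (y n) (y 0) \<ge> A - c - \<delta>" using A[of n] Suc by linarith
  have "gp (y (Suc n)) (y n) (y (Suc (Suc n))) \<ge>
     min (gp (y (Suc n)) (y n) (y 0)) (gp (y (Suc n)) (y 0) (y (Suc (Suc n)))) - \<delta>"
    using four y by blast
  then show ?case using 1 c[of n] Ac by (simp add: min_def split: if_splits)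
qed

lemma chain2:
  assumes y: "\<And>i. y i \<in> carrier G" and A: "\<And>i. A \<le> d (y i) (y (Suc i))"
    and c: "\<And>i. gp (y (Suc i)) (y i) (y (Suc (Suc i))) \<le> c" and c0: "0 \<le> c" and Ac: "2*c+2*\<delta> < A"
  shows "real n * (A - 2*c - 2*\<delta>) \<le> d (y 0) (y n)"
proof (induct n)
  case 0 then show ?case using d_nonneg by simp
next
  case (Suc n)
  have g: "gp (y n) (y 0) (y (Suc n)) \<le> c + \<delta>" using chain1[of y A c n, OF assms] .
  have "d (y 0) (y (Suc n)) = d (y n) (y 0) + d (y n) (y (Suc n)) - 2 * gp (y n) (y 0) (y (Suc n))"
    unfolding gromov_product_def by (simp add: field_simps)
  then show ?case using g A[of n] Suc d_sym[of "y n" "y 0"] y by (simp add: algebra_simps)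
qed

lemma altw_closed: "a \<in> carrier G \<Longrightarrow> b \<in> carrier G \<Longrightarrow> altw G a b n \<in> carrier G"
  by (induct n) auto

lemma altw_even: "a \<in> carrier G \<Longrightarrow> b \<in> carrier G \<Longrightarrow> altw G a b (2 * Suc k) = altw G a b (2 * k) \<otimes> (a \<otimes> b)"
  by (simp add: m_assoc altw_closed)

lemma altw_pow_bound: assumes "a \<in> carrier G" "b \<in> carrier G" "p \<in> carrier G" "D (a \<otimes> b) p \<le> L"
  shows "d p (altw G a b (2 * k) \<otimes> p) \<le> real k * L"
proof (induct k)
  case 0 then show ?case using assms d_refl by simp
next
  case (Suc k)
  let ?h = "altw G a b (2 * k)"
  have h: "?h \<in> carrier G" using altw_closed assms by blast
  have "d p (altw G a b (2 * Suc k) \<otimes> p) = d p (?h \<otimes> ((a \<otimes> b) \<otimes> p))"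
    using altw_even assms h by (simp add: m_assoc)
  also have "\<dots> \<le> d p (?h \<otimes> p) + d (?h \<otimes> p) (?h \<otimes> ((a \<otimes> b) \<otimes> p))"
    using d_tri assms h by simp
  also have "d (?h \<otimes> p) (?h \<otimes> ((a \<otimes> b) \<otimes> p)) = D (a \<otimes> b) p"
    unfolding D_def using d_isom assms h by simp
  finally show ?case using Suc assms by (simp add: algebra_simps)
qed

lemma serre_chain:
  assumes ab: "a \<in> carrier G" "b \<in> carrier G" and x: "x \<in> carrier G"
    and Aa: "A \<le> D a x" and Ab: "A \<le> D b x"
    and c1: "gp x (inv a \<otimes> x) (b \<otimes> x) \<le> c" and c2: "gp x (inv b \<otimes> x) (a \<otimes> x) \<le> c"
    and c0: "0 \<le> c" and Ac: "2*c+2*\<delta> < A"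
    and p: "p \<in> carrier G" and L: "D (a \<otimes> b) p \<le> L"
  shows "2 * (A - 2*c - 2*\<delta>) \<le> L"
proof (rule ccontr)
  assume neg: "\<not> 2 * (A - 2*c - 2*\<delta>) \<le> L"
  define e where "e = 2 * (A - 2*c - 2*\<delta>) - L"
  have e: "0 < e" using neg e_def by simp
  define h where "h = altw G a b"
  define lt where "lt i = (if even (i::nat) then a else b)" for i
  define y where "y (i::nat) = h i \<otimes> x" for i
  have hc: "h i \<in> carrier G" for i using altw_closed ab h_def by blast
  have lc: "lt i \<in> carrier G" for i using ab lt_def by simp
  have hS: "h (Suc i) = h i \<otimes> lt i" for i unfolding h_def lt_def by simp
  have yc: "y i \<in> carrier G" for i using hc x y_def by simp
  have dstep: "A \<le> d (y i) (y (Suc i))" for i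
  proof -
    have "d (y i) (y (Suc i)) = d (h i \<otimes> x) (h i \<otimes> (lt i \<otimes> x))"
      unfolding y_def hS using hc lc x by (simp add: m_assoc)
    also have "\<dots> = D (lt i) x" unfolding D_def using d_isom hc lc x by simp
    finally show ?thesis using Aa Ab lt_def by simp
  qed
  have gstep: "gp (y (Suc i)) (y i) (y (Suc (Suc i))) \<le> c" for i
  proof -
    have 1: "y i = h (Suc i) \<otimes> (inv (lt i) \<otimes> x)"
      unfolding y_def hS using hc lc x by (simp add: m_assoc[symmetric]) (simp add: m_assoc)
    have 2: "y (Suc (Suc i)) = h (Suc i) \<otimes> (lt (Suc i) \<otimes> x)"
      unfolding y_def using hS[of "Suc i"] hc lc x by (simp add: m_assoc)
    have "gp (y (Suc i)) (y i) (y (Suc (Suc i))) = gp x (inv (lt i) \<otimes> x) (lt (Suc i) \<otimes> x)"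
      unfolding 1 2 unfolding y_def using gp_isom hc lc x by simp
    then show ?thesis using c1 c2 lt_def by (cases "even i") auto
  qed
  obtain k where k: "2 * d x p < real k * e" using reals_Archimedean3[OF e] by blast
  have "real (2 * k) * (A - 2*c - 2*\<delta>) \<le> d (y 0) (y (2 * k))"
    using chain2[of y A c, OF yc dstep gstep c0 Ac] .
  also have "y 0 = x" unfolding y_def h_def using x by simp
  also have "d x (y (2 * k)) \<le> d x p + d p (h (2 * k) \<otimes> p) + d (h (2 * k) \<otimes> p) (h (2 * k) \<otimes> x)"
    unfolding y_def using d_tri hc x p by (meson add_mono_thms_linordered_semiring(3) d_tri m_closed order_trans)
  also have "d (h (2 * k) \<otimes> p) (h (2 * k) \<otimes> x) = d x p" using d_isom d_sym hc x p by simp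
  also have "d p (h (2 * k) \<otimes> p) \<le> real k * L" unfolding h_def using altw_pow_bound ab p L by blast
  finally have "real (2 * k) * (A - 2*c - 2*\<delta>) \<le> 2 * d x p + real k * L" by simp
  then have "real k * e \<le> 2 * d x p" unfolding e_def by (simp add: algebra_simps)
  then show False using k by simp
qed

lemma gp_lower:
  assumes g: "g \<in> carrier G" and x: "x \<in> carrier G" and p: "p \<in> carrier G"
  shows "gp x (inv g \<otimes> x) p \<ge> (D g x - D g p) / 2"
proof -
  have "d (inv g \<otimes> x) p = d (g \<otimes> (inv g \<otimes> x)) (g \<otimes> p)" using d_isom g x p by simp
  also have "\<dots> = d x (g \<otimes> p)" using g x by (simp add: m_assoc[symmetric])
  also have "\<dots> \<le> d x p + D g p" unfolding D_def using d_tri g x p by simp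
  finally have 1: "d (inv g \<otimes> x) p \<le> d x p + D g p" .
  have "d x (inv g \<otimes> x) = D g x" using D_inv g x unfolding D_def by simp
  then show ?thesis unfolding gromov_product_def using 1 by simp
qed

lemma gp_lower': 
  assumes g: "g \<in> carrier G" and x: "x \<in> carrier G" and p: "p \<in> carrier G"
  shows "gp x (g \<otimes> x) p \<ge> (D g x - D g p) / 2"
  using gp_lower[of "inv g" x p] g x p D_inv by simp

lemma pair_min:
  assumes ab: "a \<in> carrier G" "b \<in> carrier G" and pqx: "p \<in> carrier G" "q \<in> carrier G" "x \<in> carrier G"
    and Dp: "D a p \<le> Lp" and Dq: "D b q \<le> Lp" and geo: "d p x + d x q = d p q"
    and r: "r \<in> carrier G" and L: "D (a \<otimes> b) r \<le> L" and L0: "0 \<le> L"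
  shows "D a x \<le> max (Lp + 4*\<delta>) (L/2 + 6*\<delta>) \<or> D b x \<le> max (Lp + 4*\<delta>) (L/2 + 6*\<delta>)"
proof (rule ccontr)
  let ?M = "max (Lp + 4*\<delta>) (L/2 + 6*\<delta>)"
  assume neg: "\<not> (D a x \<le> ?M \<or> D b x \<le> ?M)"
  define A where "A = min (D a x) (D b x)"
  have AM: "A > ?M" using neg A_def by (simp add: not_le)
  have dl: "0 \<le> \<delta>" by (rule delta_nonneg)
  have Dab: "D a x > Lp + 4*\<delta>" "D b x > Lp + 4*\<delta>" using neg by auto
  have inv_c: "inv a \<in> carrier G" "inv b \<in> carrier G" using ab by auto
  have g0: "gp x p q = 0" unfolding gromov_product_def using geo d_sym[of x p] pqx by simp
  have P1: "gp x (inv a \<otimes> x) p > 2*\<delta>" using gp_lower[of a x p] ab pqx Dp Dab by simp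
  have Q1: "gp x (b \<otimes> x) q > 2*\<delta>" using gp_lower'[of b x q] ab pqx Dq Dab by simp
  have P2: "gp x (a \<otimes> x) p > 2*\<delta>" using gp_lower'[of a x p] ab pqx Dp Dab by simp
  have Q2: "gp x (inv b \<otimes> x) q > 2*\<delta>" using gp_lower[of b x q] ab pqx Dq Dab by simp
  have c1: "gp x (inv a \<otimes> x) (b \<otimes> x) \<le> 2*\<delta>"
  proof -
    have "gp x p q \<ge> min (gp x p (inv a \<otimes> x)) (gp x (inv a \<otimes> x) q) - \<delta>"
      using four ab pqx inv_c by simp
    moreover have "gp x (inv a \<otimes> x) q \<ge> min (gp x (inv a \<otimes> x) (b \<otimes> x)) (gp x (b \<otimes> x) q) - \<delta>"
      using four ab pqx inv_c by simp
    moreover have "gp x p (inv a \<otimes> x) = gp x (inv a \<otimes> x) p" using gp_sym ab pqx inv_c by simp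
    ultimately show ?thesis using g0 P1 Q1 dl by (simp add: min_def split: if_splits)
  qed
  have c2: "gp x (inv b \<otimes> x) (a \<otimes> x) \<le> 2*\<delta>"
  proof -
    have "gp x p q \<ge> min (gp x p (a \<otimes> x)) (gp x (a \<otimes> x) q) - \<delta>"
      using four ab pqx inv_c by simp
    moreover have "gp x (a \<otimes> x) q \<ge> min (gp x (a \<otimes> x) (inv b \<otimes> x)) (gp x (inv b \<otimes> x) q) - \<delta>"
      using four ab pqx inv_c by simp
    moreover have "gp x p (a \<otimes> x) = gp x (a \<otimes> x) p" using gp_sym ab pqx inv_c by simp
    moreover have "gp x (a \<otimes> x) (inv b \<otimes> x) = gp x (inv b \<otimes> x) (a \<otimes> x)" using gp_sym ab pqx inv_c by simp
    ultimately show ?thesis using g0 P2 Q2 dl by (simp add: min_def split: if_splits)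
  qed
  have "2 * (A - 2*(2*\<delta>) - 2*\<delta>) \<le> L"
    by (rule serre_chain[OF ab pqx(3) _ _ c1 c2 _ _ r L]) (use AM A_def dl L0 in auto)
  then show False using AM by simp
qed

lemma walk:
  assumes a: "a \<in> carrier G" and Bs: "set Bs \<subseteq> carrier G" and pq: "p \<in> carrier G" "q \<in> carrier G"
    and good: "\<And>z. z \<in> carrier G \<Longrightarrow> d p z + d z q = d p q \<Longrightarrow> D a z \<le> M \<or> (\<forall>b\<in>set Bs. D b z \<le> M)"
    and Dq: "\<forall>b\<in>set Bs. D b q \<le> M"
  shows "\<forall>z\<in>carrier G. d p z + d z q = d p q \<longrightarrow> D a z \<le> M \<longrightarrow> wl (inv z \<otimes> q) \<le> n \<longrightarrow>
     (\<exists>x\<in>carrier G. D a x \<le> M + 2 \<and> (\<forall>b\<in>set Bs. D b x \<le> M + 2))"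
proof (induct n)
  have base: "\<exists>x\<in>carrier G. D a x \<le> M + 2 \<and> (\<forall>b\<in>set Bs. D b x \<le> M + 2)"
    if z: "z \<in> carrier G" "D a z \<le> M" "wl (inv z \<otimes> q) = 0" for z
  proof -
    have dqz: "d q z = 0" using z d_sym[of q z] pq unfolding word_dist_def by simp
    have "D b z \<le> M + 2" if "b \<in> set Bs" for b
    proof -
      have bc: "b \<in> carrier G" using that Bs by blast
      show ?thesis using D_move[of b q z] bc that pq z Dq dqz by fastforce
    qed
    then show ?thesis using z by (intro bexI[of _ z]) auto
  qed
  {
    case 0 then show ?case using base by auto
  next
    case (Suc n)
    show ?case
    proof (intro ballI impI)
      fix z assume z: "z \<in> carrier G" and geo: "d p z + d z q = d p q" and Dz: "D a z \<le> M"
        and wlz: "wl (inv z \<otimes> q) \<le> Suc n"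
      show "\<exists>x\<in>carrier G. D a x \<le> M + 2 \<and> (\<forall>b\<in>set Bs. D b x \<le> M + 2)"
      proof (cases "wl (inv z \<otimes> q)")
        case 0 then show ?thesis using base z Dz by blast
      next
        case (Suc m)
        then obtain z' where z': "z' \<in> carrier G" "d z z' \<le> 1" "wl (inv z' \<otimes> q) \<le> m"
          using neighbor[of z q m] z pq by blast
        have dzq: "d z q = real (Suc m)" using Suc unfolding word_dist_def by simp
        have dz'q: "d z' q \<le> real m" using z' unfolding word_dist_def by simp
        have "d p z' \<le> d p z + d z z'" using d_tri pq z z' by blast
        moreover have "d p q \<le> d p z' + d z' q" using d_tri pq z z' by blast
        ultimately have geo': "d p z' + d z' q = d p q" using geo dzq dz'q z' by linarith
        show ?thesis
        proof (cases "D a z' \<le> M")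
          case True
          then show ?thesis using Suc.hyps z' geo' Suc wlz by auto
        next
          case False
          then have "\<forall>b\<in>set Bs. D b z' \<le> M" using good[OF z'(1) geo'] by auto
          then have "D b z \<le> M + 2" if "b \<in> set Bs" for b
          proof -
            have bc: "b \<in> carrier G" using that Bs by blast
            show ?thesis using D_move[of b z' z] bc that z z' d_sym[of z z'] \<open>\<forall>b\<in>set Bs. D b z' \<le> M\<close> by fastforce
          qed
          then show ?thesis using z Dz by (intro bexI[of _ z]) auto
        qed
      qed
    qed
  }
qed

lemma multi:
  assumes L0: "0 \<le> L" and as: "set as \<subseteq> carrier G"
    and fixp: "\<forall>a\<in>set as. \<exists>p\<in>carrier G. D a p \<le> L"
    and pairs: "\<forall>a\<in>set as. \<forall>a'\<in>set as. a \<noteq> a' \<longrightarrow> (\<exists>r\<in>carrier G. D (a \<otimes> a') r \<le> L)"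
  shows "\<exists>x\<in>carrier G. \<forall>a\<in>set as. D a x \<le> L + real (length as) * (L + 6*\<delta> + 2)"
  using as fixp pairs
proof (induct as)
  case Nil then show ?case by auto
next
  case (Cons a as)
  have dl: "0 \<le> \<delta>" by (rule delta_nonneg)
  define K where "K = L + real (length as) * (L + 6*\<delta> + 2)"
  have K0: "0 \<le> K" using L0 dl K_def by simp
  obtain q where q: "q \<in> carrier G" "\<forall>a'\<in>set as. D a' q \<le> K"
    using Cons K_def by auto
  have ac: "a \<in> carrier G" using Cons by simp
  have asc: "set as \<subseteq> carrier G" using Cons by simp
  have KK: "L + real (length (a # as)) * (L + 6*\<delta> + 2) = K + (L + 6*\<delta> + 2)" unfolding K_def
    by (simp add: algebra_simps)
  show ?case
  proof (cases "a \<in> set as")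
    case True
    show ?thesis
    proof (intro bexI[of _ q] ballI)
      fix a' assume "a' \<in> set (a # as)"
      then have "D a' q \<le> K" using q True by auto
      then show "D a' q \<le> L + real (length (a # as)) * (L + 6*\<delta> + 2)" using KK L0 dl by simp
    qed (use q in auto)
  next
    case False
    obtain p where p: "p \<in> carrier G" "D a p \<le> L" using Cons by auto
    define M where "M = max (L + K + 4*\<delta>) (L/2 + 6*\<delta>)"
    have good: "D a z \<le> M \<or> (\<forall>b\<in>set as. D b z \<le> M)"
      if z: "z \<in> carrier G" "d p z + d z p' = d p p'" and p'q: "p' = q" for z p'
    proof -
      have "D b z \<le> M" if b: "b \<in> set as" "\<not> D a z \<le> M" for b
      proof -
        obtain r where r: "r \<in> carrier G" "D (a \<otimes> b) r \<le> L" using Cons.prems b False by fastforce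
        have "D a z \<le> M \<or> D b z \<le> M"
          unfolding M_def
          by (rule pair_min[of a b p q z "L + K" r L]) (use ac asc b p q z p'q r L0 K0 in auto)
        then show ?thesis using b by simp
      qed
      then show ?thesis by auto
    qed
    have "\<forall>z\<in>carrier G. d p z + d z q = d p q \<longrightarrow> D a z \<le> M \<longrightarrow> wl (inv z \<otimes> q) \<le> wl (inv p \<otimes> q) \<longrightarrow>
     (\<exists>x\<in>carrier G. D a x \<le> M + 2 \<and> (\<forall>b\<in>set as. D b x \<le> M + 2))"
    proof (rule walk[OF ac asc p(1) q(1)])
      show "\<forall>b\<in>set as. D b q \<le> M"
      proof
        fix b assume "b \<in> set as"
        then have "D b q \<le> K" using q by auto
        then show "D b q \<le> M" using M_def L0 dl by simp
      qed
    qed (use good in auto)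
    moreover have "D a p \<le> M" using p M_def K0 dl by simp
    ultimately obtain x where x: "x \<in> carrier G" "D a x \<le> M + 2" "\<forall>b\<in>set as. D b x \<le> M + 2"
      using p d_refl[of p] by auto
    have "M + 2 \<le> K + (L + 6*\<delta> + 2)" using M_def L0 K0 dl by simp
    then show ?thesis using x KK by (intro bexI[of _ x]) auto
  qed
qed

end

lemma wl_compare:
  assumes "group G" and S: "S \<subseteq> carrier G" "generate G S = carrier G" "finite S"
    and S0: "S0 \<subseteq> carrier G" "generate G S0 = carrier G"
  shows "\<exists>R::nat. \<forall>g\<in>carrier G. word_length G S0 g \<le> R * word_length G S g"
proof -
  interpret W: wgroup G S using assms by (simp add: wgroup_def wgroup_axioms_def)
  interpret W0: wgroup G S0 using assms by (simp add: wgroup_def wgroup_axioms_def)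
  define R where "R = (\<Sum>l\<in>W.alph. W0.wl l)"
  have fin: "finite W.alph" using S by simp
  have lR: "W0.wl l \<le> R" if "l \<in> W.alph" for l
    unfolding R_def using member_le_sum[OF that, of W0.wl] fin by simp
  have fw: "set ws \<subseteq> W.alph \<Longrightarrow> W0.wl (W.fp ws) \<le> R * length ws" for ws
  proof (induct ws)
    case Nil then show ?case using W0.wl_one by simp
  next
    case (Cons a ws)
    have ac: "a \<in> carrier G" using Cons W.alph_sub by auto
    have wc: "set ws \<subseteq> carrier G" using Cons W.alph_sub by auto
    have "W0.wl (W.fp (a # ws)) \<le> W0.wl a + W0.wl (W.fp ws)"
      using W0.wl_mult[OF ac W.fp_closed[OF wc]] by simp
    then show ?case using Cons lR[of a] by simp
  qed
  show ?thesis
  proof (intro exI ballI)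
    fix g assume g: "g \<in> carrier G"
    obtain ws where "length ws = W.wl g" "set ws \<subseteq> W.alph" "W.fp ws = g" using W.wl_attained[OF g] by blast
    then show "W0.wl g \<le> R * W.wl g" using fw by metis
  qed
qed

lemma limsup_bounded:
  fixes f :: "nat \<Rightarrow> nat"
  assumes "limsup (\<lambda>n. ereal (real (f n))) \<noteq> \<infinity>"
  shows "\<exists>C. \<forall>n. f n \<le> C"
proof -
  obtain r where r: "limsup (\<lambda>n. ereal (real (f n))) < ereal r"
  proof (cases "limsup (\<lambda>n. ereal (real (f n)))")
    case (real x) then show ?thesis using that[of "x + 1"] by simp
  next
    case PInf then show ?thesis using assms by simp
  next
    case MInf then show ?thesis using that[of 0] by simp
  qed
  have "eventually (\<lambda>n. ereal (real (f n)) < ereal r) sequentially" using Limsup_lessD[OF r] .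
  then obtain N where N: "\<And>n. n \<ge> N \<Longrightarrow> real (f n) < r" by (auto simp: eventually_sequentially)
  define C where "C = nat \<lceil>r\<rceil> + (\<Sum>i<N. f i)"
  have "f n \<le> C" for n
  proof (cases "n < N")
    case True
    then have "f n \<le> (\<Sum>i<N. f i)" using member_le_sum[of n "{..<N}" f] by simp
    then show ?thesis unfolding C_def by simp
  next
    case False
    then have "real (f n) < r" using N by simp
    then have "f n \<le> nat \<lceil>r\<rceil>" by linarith
    then show ?thesis unfolding C_def by simp
  qed
  then show ?thesis by blast
qed

lemma (in group) transl_witness:
  "\<exists>g\<in>carrier G. word_length G S (g \<otimes> \<gamma> \<otimes> inv g) = transl_length G S \<gamma>"
proof -
  have "\<exists>k. \<exists>g\<in>carrier G. k = word_length G S (g \<otimes> \<gamma> \<otimes> inv g)" by blast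
  from LeastI_ex[OF this] show ?thesis unfolding transl_length_def by metis
qed

lemma (in group) t1: "X \<in> carrier G \<Longrightarrow> u \<in> carrier G \<Longrightarrow> X \<otimes> (inv X \<otimes> u \<otimes> X) \<otimes> inv X = u"
  by (simp add: m_assoc) (simp add: m_assoc[symmetric])
lemma (in group) t2: "X \<in> carrier G \<Longrightarrow> Y \<in> carrier G \<Longrightarrow> v \<in> carrier G \<Longrightarrow> X \<otimes> (inv Y \<otimes> v \<otimes> Y) \<otimes> inv X = (X \<otimes> inv Y) \<otimes> v \<otimes> inv (X \<otimes> inv Y)"
  by (simp add: m_assoc inv_mult_group)
lemma (in group) t3: "Z \<in> carrier G \<Longrightarrow> u \<in> carrier G \<Longrightarrow> inv Z \<otimes> inv u \<otimes> Z = inv (inv Z \<otimes> u \<otimes> Z)"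
  by (simp add: inv_mult_group m_assoc)
lemma (in group) t4: "Z \<in> carrier G \<Longrightarrow> u \<in> carrier G \<Longrightarrow> w \<in> carrier G \<Longrightarrow> inv Z \<otimes> (u \<otimes> w) \<otimes> Z = (inv Z \<otimes> u \<otimes> Z) \<otimes> (inv Z \<otimes> w \<otimes> Z)"
  by (simp add: m_assoc) (simp add: m_assoc[symmetric])

lemma (in group) conj_eq:
  assumes "X \<in> carrier G" "Y \<in> carrier G" "u \<in> carrier G" "v \<in> carrier G"
    and e: "inv X \<otimes> u \<otimes> X = inv Y \<otimes> v \<otimes> Y"
  shows "u = (X \<otimes> inv Y) \<otimes> v \<otimes> inv (X \<otimes> inv Y)"
proof -
  have "u = X \<otimes> (inv X \<otimes> u \<otimes> X) \<otimes> inv X" using t1 assms(1,3) by simp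
  also have "\<dots> = X \<otimes> (inv Y \<otimes> v \<otimes> Y) \<otimes> inv X" by (simp only: e)
  also have "\<dots> = (X \<otimes> inv Y) \<otimes> v \<otimes> inv (X \<otimes> inv Y)" using t2 assms(1,2,4) by simp
  finally show ?thesis .
qed

lemma (in group) hom_conj_agree:
  assumes f: "f \<in> hom G G" and g: "g \<in> hom G G" and XY: "X \<in> carrier G" "Y \<in> carrier G"
    and S: "S \<subseteq> carrier G"
    and agree: "\<forall>s\<in>S. inv X \<otimes> f s \<otimes> X = inv Y \<otimes> g s \<otimes> Y"
    and y: "y \<in> generate G S"
  shows "inv X \<otimes> f y \<otimes> X = inv Y \<otimes> g y \<otimes> Y"
  using y
proof (induct y rule: generate.induct)
  have gh: "group_hom G G f" "group_hom G G g" using f g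
    by (simp_all add: group_hom_def group_hom_axioms_def is_group)
  {
    case one
    have "f \<one> = \<one>" "g \<one> = \<one>" using group_hom.hom_one[OF gh(1)] group_hom.hom_one[OF gh(2)] by simp_all
    then show ?case using XY by simp
  next
    case (incl h) then show ?case using agree by blast
  next
    case (inv h)
    have hc: "h \<in> carrier G" using inv S by blast
    have fc: "f h \<in> carrier G" "g h \<in> carrier G" using hom_in_carrier[OF f hc] hom_in_carrier[OF g hc] by auto
    have fi: "f (inv h) = inv (f h)" "g (inv h) = inv (g h)" using group_hom.hom_inv[OF gh(1) hc] group_hom.hom_inv[OF gh(2) hc] by auto
    have "inv X \<otimes> f (inv h) \<otimes> X = inv (inv X \<otimes> f h \<otimes> X)"
      unfolding fi using t3 fc XY by blast
    also have "\<dots> = inv (inv Y \<otimes> g h \<otimes> Y)" using agree inv by metis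
    also have "\<dots> = inv Y \<otimes> g (inv h) \<otimes> Y"
      unfolding fi using t3 fc XY by metis
    finally show ?case .
  next
    case (eng h1 h2)
    have hc: "h1 \<in> carrier G" "h2 \<in> carrier G" using eng(1,3) generate_in_carrier[OF S] by auto
    have fc: "f h1 \<in> carrier G" "g h1 \<in> carrier G" "f h2 \<in> carrier G" "g h2 \<in> carrier G"
      using hom_in_carrier[OF f] hom_in_carrier[OF g] hc by auto
    have "inv X \<otimes> f (h1 \<otimes> h2) \<otimes> X = (inv X \<otimes> f h1 \<otimes> X) \<otimes> (inv X \<otimes> f h2 \<otimes> X)"
      unfolding hom_mult[OF f hc] using t4 XY fc by blast
    also have "\<dots> = (inv Y \<otimes> g h1 \<otimes> Y) \<otimes> (inv Y \<otimes> g h2 \<otimes> Y)" using eng by metis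
    also have "\<dots> = inv Y \<otimes> g (h1 \<otimes> h2) \<otimes> Y"
      unfolding hom_mult[OF g hc] using t4 XY fc by metis
    finally show ?case .
  }
qed




lemma (in group) main_aux:
  fixes \<phi> :: "nat \<Rightarrow> 'a \<Rightarrow> 'a"
  assumes fgs0: "finite_generating_set G S0"
    and four: "\<forall>w\<in>carrier G. \<forall>x\<in>carrier G. \<forall>y\<in>carrier G. \<forall>z\<in>carrier G.
        gromov_product G S0 w x z \<ge> min (gromov_product G S0 w x y) (gromov_product G S0 w y z) - \<delta>"
    and fgs: "finite_generating_set G S"
    and iso: "\<And>n. \<phi> n \<in> iso G G"
    and dist: "\<And>m n. m \<noteq> n \<Longrightarrow> \<not> out_equiv G (\<phi> m) (\<phi> n)"
    and bdd: "\<forall>b\<in>test_set_B G S. \<exists>C. \<forall>n. transl_length G S (\<phi> n b) \<le> C"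
  shows False
proof -
  have S: "finite S" "S \<subseteq> carrier G" "generate G S = carrier G"
    using fgs unfolding finite_generating_set_def by auto
  have S0: "finite S0" "S0 \<subseteq> carrier G" "generate G S0 = carrier G"
    using fgs0 unfolding finite_generating_set_def by auto
  interpret H: hgroup G S0 \<delta>
    by (rule hgroup.intro[OF wgroup.intro[OF is_group wgroup_axioms.intro[OF S0(2,3)]] hgroup_axioms.intro])
      (use four in blast)
  have dl: "0 \<le> \<delta>" by (rule H.delta_nonneg)
  obtain R where R: "\<forall>g\<in>carrier G. word_length G S0 g \<le> R * word_length G S g"
    using wl_compare[OF is_group S(2,3,1) S0(2,3)] by blast
  define B where "B = test_set_B G S"
  have hom: "\<phi> n \<in> hom G G" for n using iso unfolding iso_def by blast
  have phic: "x \<in> carrier G \<Longrightarrow> \<phi> n x \<in> carrier G" for n x using hom_in_carrier[OF hom] by blast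
  have Bsub: "B \<subseteq> carrier G" unfolding B_def test_set_B_def using S by auto
  have finB: "finite B"
  proof -
    have "B \<subseteq> S \<union> (\<lambda>(s, s'). s \<otimes> s') ` (S \<times> S)" unfolding B_def test_set_B_def by auto
    moreover have "finite (S \<union> (\<lambda>(s, s'). s \<otimes> s') ` (S \<times> S))" using S by simp
    ultimately show ?thesis by (rule finite_subset)
  qed
  obtain Cf where Cf: "\<forall>b\<in>B. \<forall>n. transl_length G S (\<phi> n b) \<le> Cf b"
    using bchoice[OF bdd] unfolding B_def by blast
  define L0 where "L0 = (\<Sum>b\<in>B. Cf b)"
  have tl: "transl_length G S (\<phi> n b) \<le> L0" if "b \<in> B" for b n
  proof -
    have "Cf b \<le> L0" unfolding L0_def using member_le_sum[OF that, of Cf] finB by simp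
    then show ?thesis using Cf that by (meson order_trans)
  qed
  define L :: real where "L = real (R * L0)"
  have L0': "0 \<le> L" unfolding L_def by simp
  have fixb: "\<exists>p\<in>carrier G. H.D (\<phi> n b) p \<le> L" if b: "b \<in> B" for b n
  proof -
    have gc: "\<phi> n b \<in> carrier G" using phic Bsub b by blast
    obtain g where g: "g \<in> carrier G" "word_length G S (g \<otimes> \<phi> n b \<otimes> inv g) = transl_length G S (\<phi> n b)"
      using transl_witness by blast
    have "inv (inv g) \<otimes> (\<phi> n b \<otimes> inv g) = g \<otimes> \<phi> n b \<otimes> inv g" using g gc by (simp add: m_assoc)
    then have "H.D (\<phi> n b) (inv g) = real (word_length G S0 (g \<otimes> \<phi> n b \<otimes> inv g))"
      unfolding H.D_def word_dist_def by simp
    also have "\<dots> \<le> real (R * word_length G S (g \<otimes> \<phi> n b \<otimes> inv g))"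
    proof -
      have ec: "g \<otimes> \<phi> n b \<otimes> inv g \<in> carrier G" using g gc by simp
      have "word_length G S0 (g \<otimes> \<phi> n b \<otimes> inv g) \<le> R * word_length G S (g \<otimes> \<phi> n b \<otimes> inv g)"
        using R ec by blast
      then show ?thesis by (simp only: of_nat_le_iff)
    qed
    also have "\<dots> \<le> L" unfolding L_def using g tl[OF b, of n] by (simp only: of_nat_le_iff mult_le_mono2)
    finally show ?thesis using g by blast
  qed
  obtain xs where xs: "set xs = S" using finite_list S by blast
  define K where "K = L + real (length xs) * (L + 6*\<delta> + 2)"
  have "\<exists>x\<in>carrier G. \<forall>s\<in>S. H.D (\<phi> n s) x \<le> K" for n
  proof -
    have "\<exists>x\<in>carrier G. \<forall>a\<in>set (map (\<phi> n) xs). H.D a x \<le> L + real (length (map (\<phi> n) xs)) * (L + 6*\<delta> + 2)"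
    proof (rule H.multi[OF L0'])
      show "set (map (\<phi> n) xs) \<subseteq> carrier G" using xs S phic by auto
      show "\<forall>a\<in>set (map (\<phi> n) xs). \<exists>p\<in>carrier G. H.D a p \<le> L"
        using xs fixb unfolding B_def test_set_B_def by auto
      show "\<forall>a\<in>set (map (\<phi> n) xs). \<forall>a'\<in>set (map (\<phi> n) xs). a \<noteq> a' \<longrightarrow> (\<exists>r\<in>carrier G. H.D (a \<otimes> a') r \<le> L)"
      proof (intro ballI impI)
        fix a a' assume a: "a \<in> set (map (\<phi> n) xs)" and a': "a' \<in> set (map (\<phi> n) xs)" and ne: "a \<noteq> a'"
        obtain s s' where ss: "s \<in> S" "s' \<in> S" "a = \<phi> n s" "a' = \<phi> n s'" using a a' xs by auto
        have "s \<noteq> s'" using ss ne by auto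
        then have "s \<otimes> s' \<in> B" unfolding B_def test_set_B_def using ss by blast
        moreover have "\<phi> n (s \<otimes> s') = a \<otimes> a'" using hom_mult[OF hom] ss S by auto
        ultimately show "\<exists>r\<in>carrier G. H.D (a \<otimes> a') r \<le> L" using fixb by metis
      qed
    qed
    then show ?thesis unfolding K_def using xs by auto
  qed
  then obtain X where X: "\<And>n. X n \<in> carrier G" "\<And>n s. s \<in> S \<Longrightarrow> H.D (\<phi> n s) (X n) \<le> K"
    by metis
  obtain N :: nat where N: "K \<le> real N" using real_arch_simple by blast
  define Bl where "Bl = H.fp ` {ws. set ws \<subseteq> H.alph \<and> length ws \<le> N}"
  have finBl: "finite Bl" unfolding Bl_def using finite_lists_length_le[of H.alph N] S0 by simp
  define F where "F n = map (\<lambda>s. inv (X n) \<otimes> \<phi> n s \<otimes> X n) xs" for n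
  have Fin: "F n \<in> {ys. set ys \<subseteq> Bl \<and> length ys \<le> length xs}" for n
  proof -
    have "inv (X n) \<otimes> \<phi> n s \<otimes> X n \<in> Bl" if s: "s \<in> S" for s
    proof -
      have ec: "inv (X n) \<otimes> \<phi> n s \<otimes> X n \<in> carrier G" using X phic s S by blast
      have "H.D (\<phi> n s) (X n) = real (word_length G S0 (inv (X n) \<otimes> \<phi> n s \<otimes> X n))"
        unfolding H.D_def word_dist_def using X phic s S by (simp add: m_assoc subsetD)
      then have "word_length G S0 (inv (X n) \<otimes> \<phi> n s \<otimes> X n) \<le> N" using X(2)[OF s, of n] N by linarith
      moreover obtain ws where "length ws = word_length G S0 (inv (X n) \<otimes> \<phi> n s \<otimes> X n)" "set ws \<subseteq> H.alph"
        "H.fp ws = inv (X n) \<otimes> \<phi> n s \<otimes> X n" using H.wl_attained[OF ec] by blast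
      ultimately show ?thesis unfolding Bl_def by (metis (mono_tags, lifting) image_eqI mem_Collect_eq)
    qed
    then show ?thesis unfolding F_def using xs by auto
  qed
  have "finite (range F)"
    by (rule finite_subset[OF _ finite_lists_length_le[OF finBl, of "length xs"]]) (use Fin in auto)
  then have "\<not> inj F" using finite_imageD by fastforce
  then obtain m n where mn: "m \<noteq> n" "F m = F n" unfolding inj_def by blast
  have agree: "\<forall>s\<in>S. inv (X m) \<otimes> \<phi> m s \<otimes> X m = inv (X n) \<otimes> \<phi> n s \<otimes> X n"
    using mn(2) xs unfolding F_def by (simp add: map_eq_conv)
  have "out_equiv G (\<phi> m) (\<phi> n)"
    unfolding out_equiv_def
  proof (intro bexI[of _ "X m \<otimes> inv (X n)"] ballI)
    fix y assume y: "y \<in> carrier G"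
    have "inv (X m) \<otimes> \<phi> m y \<otimes> X m = inv (X n) \<otimes> \<phi> n y \<otimes> X n"
      using hom_conj_agree[OF hom hom X(1) X(1) S(2) agree] y S(3) by simp
    then show "\<phi> m y = X m \<otimes> inv (X n) \<otimes> \<phi> n y \<otimes> inv (X m \<otimes> inv (X n))"
      using conj_eq X(1) phic y by blast
  qed (use X in auto)
  then show False using dist mn(1) by blast
qed


theorem mainTheorem5:
  fixes G :: "('a, 'b) monoid_scheme" and S :: "'a set" and \<phi> :: "nat \<Rightarrow> 'a \<Rightarrow> 'a"
  assumes "hyperbolic_group G"
    and "infinite (Out G)"
    and "finite_generating_set G S"
    and "\<And>n. \<phi> n \<in> iso G G"
    and "\<And>m n. m \<noteq> n \<Longrightarrow> \<not> out_equiv G (\<phi> m) (\<phi> n)"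
  shows "\<exists>b\<in>test_set_B G S. limsup (\<lambda>n. ereal (real (transl_length G S (\<phi> n b)))) = \<infinity>"
proof (rule ccontr)
  assume neg: "\<not> (\<exists>b\<in>test_set_B G S. limsup (\<lambda>n. ereal (real (transl_length G S (\<phi> n b)))) = \<infinity>)"
  from assms(1) obtain S0 \<delta> where grp: "group G" and fgs0: "finite_generating_set G S0"
    and four: "\<forall>w\<in>carrier G. \<forall>x\<in>carrier G. \<forall>y\<in>carrier G. \<forall>z\<in>carrier G.
        gromov_product G S0 w x z \<ge> min (gromov_product G S0 w x y) (gromov_product G S0 w y z) - \<delta>"
    unfolding hyperbolic_group_def by blast
  have bdd: "\<forall>b\<in>test_set_B G S. \<exists>C. \<forall>n. transl_length G S (\<phi> n b) \<le> C"
  proof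
    fix b assume "b \<in> test_set_B G S"
    then have "limsup (\<lambda>n. ereal (real (transl_length G S (\<phi> n b)))) \<noteq> \<infinity>" using neg by blast
    then show "\<exists>C. \<forall>n. transl_length G S (\<phi> n b) \<le> C" by (rule limsup_bounded)
  qed
  show False
    by (rule group.main_aux[OF grp fgs0 four assms(3) assms(4) assms(5) bdd])
qed

end
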